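(* Consider the quantized estimation system described in the context. Assume (i) the interior of $\Theta$ in $\mathbb{R}^{D_\theta}$ is nonempty, and (ii) for every $j$ and every $\mathbf{s}\in\mathcal{S}_j$, $q_j^{(\mathbf{s})}(\theta)$ is continuous in $\theta$. Then for any quantization regions $\{I_{jl}^{(r)}\}$ and any statistical models $\{(\mathscr{X}_j,\mathscr{F}_j,\mathscr{P}_j^\theta)\}$, if $$D_\theta>\lambda(N,\{R_{jl}\}):=\sum_{j=1}^N\prod_{l=1}^{L_j}R_{jl}-N,$$ then the parameter space $\Theta$ is not identifiable. Moreover, for any subset $\mathcal{U}\subset\Theta$ that is open in $\mathbb{R}^{D_\theta}$, there are infinitely many parameter points in $\mathcal{U}$ which are not identifiable.
   Context: Setting: $\Theta\subset\mathbb{R}^{D_\theta}$ is a parameter set. There are $N\ge 1$ sensors. Sensor $j$ observes a random vector $\mathbf{x}_j$ with statistical model $(\mathscr{X}_j,\mathscr{F}_j,\mathscr{P}_j^\theta)$ (law $\mathscr{P}_j^\theta$ on the measurable space $(\mathscr{X}_j,\mathscr{F}_j)$, indexed by $\theta\in\Theta$); $\mathbf{x}_1,\dots,\mathbf{x}_N$ are independent. Each $\mathbf{x}_j$ is partitioned into $L_j\ge1$ disjoint subvectors $\mathbf{x}_j=[\mathbf{x}_{j1}^T,\dots,\mathbf{x}_{jL_j}^T]^T$. For each $j,l$, $\gamma_{jl}$ is an $R_{jl}$-level vector quantizer: disjoint regions $I_{jl}^{(1)},\dots,I_{jl}^{(R_{jl})}$ cover its domain and $\gamma_{jl}(\mathbf{x}_{jl})=r$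 iff $\mathbf{x}_{jl}\in I_{jl}^{(r)}$. The (measurable) superquantizer is $\Gamma_j(\mathbf{x}_j)=[\gamma_{j1}(\mathbf{x}_{j1}),\dots,\gamma_{jL_j}(\mathbf{x}_{jL_j})]^T$; the fusion center receives $\mathbf{u}=[\mathbf{u}_1^T,\dots,\mathbf{u}_N^T]^T$, $\mathbf{u}_j=\Gamma_j(\mathbf{x}_j)$. $\mathcal{S}_j$ is the set of all possible outcomes of $\Gamma_j$, $q_j^{(\mathbf{s})}(\theta)=\mathscr{P}_j^\theta(\Gamma_j(\mathbf{x}_j)=\mathbf{s})$, and $\Pr(\mathbf{u}\mid\theta)=\prod_{j=1}^N q_j^{(\mathbf{u}_j)}(\theta)$. Two distinct $\theta,\theta'\in\Theta$ are observationally equivalent if $\Pr(\mathbf{u}\mid\theta)=\Pr(\mathbf{u}\mid\theta')$ for all possible $\mathbf{u}$. A point $\theta$ is identifiable if no $\theta'\in\Theta\setminus\{\theta\}$ is observationally equivalent to it; $\Theta$ is identifiable if every point of $\Theta$ is identifiable. *)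

theory Defs
  imports "HOL-Probability.Probability"
begin

text \<open>
  Sensors are indexed by j < N.  The observation of sensor j is a
  function x :: nat \<Rightarrow> 'y whose value x l (for l < L j) is the l-th subvector x_jl.
  The quantization regions are I j l r (r = 1..R j l), subsets of the subvector space.
  The law of sensor j's observation under parameter theta is the measure P j theta.
\<close>

definition quant :: "(nat \<Rightarrow> nat \<Rightarrow> nat \<Rightarrow> 'y set) \<Rightarrow> (nat \<Rightarrow> nat \<Rightarrow> nat) \<Rightarrow> nat \<Rightarrow> nat \<Rightarrow> 'y \<Rightarrow> nat"
  where "quant I R j l y = (THE r. r \<in> {1..R j l} \<and> y \<in> I j l r)"

text \<open>The superquantizer Gamma_j (components beyond L j are set to 0 as padding).\<close>
definition superquant :: "(nat \<Rightarrow> nat \<Rightarrow> nat \<Rightarrow> 'y set) \<Rightarrow> (nat \<Rightarrow> nat \<Rightarrow> nat) \<Rightarrow> (nat \<Rightarrow> nat)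
    \<Rightarrow> nat \<Rightarrow> (nat \<Rightarrow> 'y) \<Rightarrow> (nat \<Rightarrow> nat)"
  where "superquant I R L j x = (\<lambda>l. if l < L j then quant I R j l (x l) else 0)"

definition outcomes :: "(nat \<Rightarrow> nat \<Rightarrow> nat \<Rightarrow> 'y set) \<Rightarrow> (nat \<Rightarrow> nat \<Rightarrow> nat) \<Rightarrow> (nat \<Rightarrow> nat)
    \<Rightarrow> (nat \<Rightarrow> (nat \<Rightarrow> 'y) set) \<Rightarrow> nat \<Rightarrow> (nat \<Rightarrow> nat) set"
  where "outcomes I R L X j = superquant I R L j ` X j"

definition qprob :: "(nat \<Rightarrow> 'p \<Rightarrow> (nat \<Rightarrow> 'y) measure) \<Rightarrow> (nat \<Rightarrow> nat \<Rightarrow> nat \<Rightarrow> 'y set)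
    \<Rightarrow> (nat \<Rightarrow> nat \<Rightarrow> nat) \<Rightarrow> (nat \<Rightarrow> nat) \<Rightarrow> nat \<Rightarrow> (nat \<Rightarrow> nat) \<Rightarrow> 'p \<Rightarrow> real"
  where "qprob P I R L j s \<theta> =
           measure (P j \<theta>) {x \<in> space (P j \<theta>). superquant I R L j x = s}"

text \<open>Pr(u | theta) = prod_j q_j^(u_j)(theta) (independent sensors).\<close>
definition PrU :: "(nat \<Rightarrow> 'p \<Rightarrow> (nat \<Rightarrow> 'y) measure) \<Rightarrow> (nat \<Rightarrow> nat \<Rightarrow> nat \<Rightarrow> 'y set)
    \<Rightarrow> (nat \<Rightarrow> nat \<Rightarrow> nat) \<Rightarrow> (nat \<Rightarrow> nat) \<Rightarrow> nat \<Rightarrow> (nat \<Rightarrow> nat \<Rightarrow> nat) \<Rightarrow> 'p \<Rightarrow> real"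
  where "PrU P I R L N u \<theta> = (\<Prod>j<N. qprob P I R L j (u j) \<theta>)"

definition possible_msg :: "(nat \<Rightarrow> nat \<Rightarrow> nat \<Rightarrow> 'y set) \<Rightarrow> (nat \<Rightarrow> nat \<Rightarrow> nat) \<Rightarrow> (nat \<Rightarrow> nat)
    \<Rightarrow> (nat \<Rightarrow> (nat \<Rightarrow> 'y) set) \<Rightarrow> nat \<Rightarrow> (nat \<Rightarrow> nat \<Rightarrow> nat) \<Rightarrow> bool"
  where "possible_msg I R L X N u = (\<forall>j<N. u j \<in> outcomes I R L X j)"

definition obs_equiv :: "(nat \<Rightarrow> 'p \<Rightarrow> (nat \<Rightarrow> 'y) measure) \<Rightarrow> (nat \<Rightarrow> nat \<Rightarrow> nat \<Rightarrow> 'y set)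
    \<Rightarrow> (nat \<Rightarrow> nat \<Rightarrow> nat) \<Rightarrow> (nat \<Rightarrow> nat) \<Rightarrow> (nat \<Rightarrow> (nat \<Rightarrow> 'y) set) \<Rightarrow> nat
    \<Rightarrow> 'p \<Rightarrow> 'p \<Rightarrow> bool"
  where "obs_equiv P I R L X N \<theta> \<theta>' =
          (\<theta> \<noteq> \<theta>' \<and> (\<forall>u. possible_msg I R L X N u \<longrightarrow> PrU P I R L N u \<theta> = PrU P I R L N u \<theta>'))"

definition identifiable_point :: "(nat \<Rightarrow> 'p \<Rightarrow> (nat \<Rightarrow> 'y) measure) \<Rightarrow> (nat \<Rightarrow> nat \<Rightarrow> nat \<Rightarrow> 'y set)
    \<Rightarrow> (nat \<Rightarrow> nat \<Rightarrow> nat) \<Rightarrow> (nat \<Rightarrow> nat) \<Rightarrow> (nat \<Rightarrow> (nat \<Rightarrow> 'y) set) \<Rightarrow> nat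
    \<Rightarrow> 'p set \<Rightarrow> 'p \<Rightarrow> bool"
  where "identifiable_point P I R L X N \<Theta> \<theta> =
          (\<not> (\<exists>\<theta>'\<in>\<Theta> - {\<theta>}. obs_equiv P I R L X N \<theta> \<theta>'))"

definition identifiable_set :: "(nat \<Rightarrow> 'p \<Rightarrow> (nat \<Rightarrow> 'y) measure) \<Rightarrow> (nat \<Rightarrow> nat \<Rightarrow> nat \<Rightarrow> 'y set)
    \<Rightarrow> (nat \<Rightarrow> nat \<Rightarrow> nat) \<Rightarrow> (nat \<Rightarrow> nat) \<Rightarrow> (nat \<Rightarrow> (nat \<Rightarrow> 'y) set) \<Rightarrow> nat
    \<Rightarrow> 'p set \<Rightarrow> bool"
  where "identifiable_set P I R L X N \<Theta> =
          (\<forall>\<theta>\<in>\<Theta>. identifiable_point P I R L X N \<Theta> \<theta>)"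

end

theory Submission
  imports Defs "HOL-Homology.Invariance_of_Domain"
begin

theorem theorem2:
  fixes \<Theta> :: "(real ^ 'd) set"
    and N :: nat
    and L :: "nat \<Rightarrow> nat"
    and R :: "nat \<Rightarrow> nat \<Rightarrow> nat"
    and I :: "nat \<Rightarrow> nat \<Rightarrow> nat \<Rightarrow> 'y set"
    and X :: "nat \<Rightarrow> (nat \<Rightarrow> 'y) set"
    and F :: "nat \<Rightarrow> (nat \<Rightarrow> 'y) set set"
    and P :: "nat \<Rightarrow> real ^ 'd \<Rightarrow> (nat \<Rightarrow> 'y) measure"
  assumes N_pos: "N \<ge> 1"
    and L_pos: "\<And>j. j < N \<Longrightarrow> L j \<ge> 1"
    and R_pos: "\<And>j l. j < N \<Longrightarrow> l < L j \<Longrightarrow> R j l \<ge> 1"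
    and model_space: "\<And>j \<theta>. j < N \<Longrightarrow> \<theta> \<in> \<Theta> \<Longrightarrow> space (P j \<theta>) = X j"
    and model_sets: "\<And>j \<theta>. j < N \<Longrightarrow> \<theta> \<in> \<Theta> \<Longrightarrow> sets (P j \<theta>) = F j"
    and model_prob: "\<And>j \<theta>. j < N \<Longrightarrow> \<theta> \<in> \<Theta> \<Longrightarrow> prob_space (P j \<theta>)"
    and regions_disjoint: "\<And>j l r r'. j < N \<Longrightarrow> l < L j \<Longrightarrow> r \<in> {1..R j l} \<Longrightarrow> r' \<in> {1..R j l}
                             \<Longrightarrow> r \<noteq> r' \<Longrightarrow> I j l r \<inter> I j l r' = {}"
    and regions_cover: "\<And>j l x. j < N \<Longrightarrow> l < L j \<Longrightarrow> x \<in> X j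
                             \<Longrightarrow> x l \<in> (\<Union>r\<in>{1..R j l}. I j l r)"
    and superquant_measurable: "\<And>j s. j < N \<Longrightarrow> {x \<in> X j. superquant I R L j x = s} \<in> F j"
    and interior_nonempty: "interior \<Theta> \<noteq> {}"
    and q_continuous: "\<And>j s. j < N \<Longrightarrow> s \<in> outcomes I R L X j
                             \<Longrightarrow> continuous_on \<Theta> (qprob P I R L j s)"
    and dim_large: "int CARD('d) > (\<Sum>j<N. \<Prod>l<L j. int (R j l)) - int N"
  shows "\<not> identifiable_set P I R L X N \<Theta> \<and>
         (\<forall>U. open U \<and> U \<noteq> {} \<and> U \<subseteq> \<Theta> \<longrightarrow>
              infinite {\<theta> \<in> U. \<not> identifiable_point P I R L X N \<Theta> \<theta>})"
proof -
  define S where "S j = outcomes I R L X j" for j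
  define q where "q j s \<theta> = qprob P I R L j s \<theta>" for j s \<theta>
  obtain \<theta>0 where th0: "\<theta>0 \<in> \<Theta>" using interior_nonempty interior_subset by blast
  have quant_range: "quant I R j l (x l) \<in> {1..R j l}"
    if jlx: "j < N" "l < L j" "x \<in> X j" for j l x
  proof -
    obtain r where r: "r \<in> {1..R j l}" "x l \<in> I j l r" using regions_cover[OF jlx] by blast
    have "\<exists>!r. r \<in> {1..R j l} \<and> x l \<in> I j l r"
    proof (rule ex1I[of _ r])
      show "r \<in> {1..R j l} \<and> x l \<in> I j l r" using r by simp
      fix r' assume r': "r' \<in> {1..R j l} \<and> x l \<in> I j l r'"
      show "r' = r"
      proof (rule ccontr)
        assume "r' \<noteq> r"
        then have "I j l r' \<inter> I j l r = {}" using regions_disjoint[OF jlx(1,2)] r r' by simp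
        then show False using r r' by blast
      qed
    qed
    then have "(THE r. r \<in> {1..R j l} \<and> x l \<in> I j l r) \<in> {1..R j l} \<and> x l \<in> I j l (THE r. r \<in> {1..R j l} \<and> x l \<in> I j l r)"
      by (rule theI')
    then show ?thesis unfolding quant_def by blast
  qed
  have S_sub: "S j \<subseteq> (\<lambda>g l. if l < L j then g l else 0) ` (PiE {..<L j} (\<lambda>l. {1..R j l}))"
    if "j < N" for j
  proof
    fix s assume "s \<in> S j"
    then obtain x where x: "x \<in> X j" "s = superquant I R L j x"
      unfolding S_def outcomes_def by blast
    let ?g = "restrict (\<lambda>l. quant I R j l (x l)) {..<L j}"
    have "?g \<in> PiE {..<L j} (\<lambda>l. {1..R j l})" using quant_range[OF that _ x(1)] by auto
    moreover have "s = (\<lambda>l. if l < L j then ?g l else 0)"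
      using x(2) unfolding superquant_def by auto
    ultimately show "s \<in> (\<lambda>g l. if l < L j then g l else 0) ` (PiE {..<L j} (\<lambda>l. {1..R j l}))"
      by blast
  qed
  have S_fin: "finite (S j)" if "j < N" for j
    using S_sub[OF that] by (rule finite_subset) (auto intro: finite_PiE)
  have S_card: "card (S j) \<le> (\<Prod>l<L j. R j l)" if "j < N" for j
  proof -
    have "card (S j) \<le> card ((\<lambda>g l. if l < L j then g l else 0) ` (PiE {..<L j} (\<lambda>l. {1..R j l})))"
      using S_sub[OF that] by (rule card_mono[rotated]) (auto intro: finite_PiE)
    also have "\<dots> \<le> card (PiE {..<L j} (\<lambda>l. {1..R j l}))" by (rule card_image_le) (auto intro: finite_PiE)
    also have "\<dots> = (\<Prod>l<L j. R j l)" by (simp add: card_PiE)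
    finally show ?thesis .
  qed
  have S_ne: "S j \<noteq> {}" if "j < N" for j
  proof -
    interpret prob_space "P j \<theta>0" using model_prob[OF that th0] .
    have "X j \<noteq> {}" using not_empty model_space[OF that th0] by simp
    then show ?thesis unfolding S_def outcomes_def by blast
  qed
  define s0 where "s0 j = (SOME s. s \<in> S j)" for j
  have s0: "s0 j \<in> S j" if "j < N" for j
    unfolding s0_def using S_ne[OF that] by (simp add: some_in_eq)
  have sum1: "(\<Sum>s\<in>S j. q j s \<theta>) = 1" if "j < N" "\<theta> \<in> \<Theta>" for j \<theta>
  proof -
    interpret prob_space "P j \<theta>" using model_prob[OF that] .
    define A where "A s = {x \<in> space (P j \<theta>). superquant I R L j x = s}" for s
    have "measure (P j \<theta>) (\<Union>s\<in>S j. A s) = (\<Sum>s\<in>S j. measure (P j \<theta>) (A s))"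
    proof (rule finite_measure_finite_Union)
      show "finite (S j)" using S_fin[OF that(1)] .
      show "A ` S j \<subseteq> sets (P j \<theta>)"
        using superquant_measurable[OF that(1)] model_space[OF that] model_sets[OF that]
        unfolding A_def by auto
      show "disjoint_family_on A (S j)" unfolding disjoint_family_on_def A_def by auto
    qed
    moreover have "(\<Union>s\<in>S j. A s) = space (P j \<theta>)"
      unfolding A_def S_def outcomes_def using model_space[OF that] by auto
    ultimately show ?thesis unfolding q_def qprob_def A_def by (simp add: prob_space)
  qed
  define Pairs where "Pairs = Sigma {..<N} (\<lambda>j. S j - {s0 j})"
  have Pairs_fin: "finite Pairs" unfolding Pairs_def using S_fin by auto
  have card_Pairs: "card Pairs = (\<Sum>j<N. card (S j - {s0 j}))"
    unfolding Pairs_def using S_fin by (simp add: card_SigmaI)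
  have "int (card Pairs) \<le> (\<Sum>j<N. (\<Prod>l<L j. int (R j l)) - 1)"
    unfolding card_Pairs of_nat_sum
  proof (rule sum_mono)
    fix j assume "j \<in> {..<N}"
    then have j: "j < N" by simp
    have "card (S j - {s0 j}) = card (S j) - 1" using s0[OF j] S_fin[OF j] by simp
    moreover have "card (S j) \<ge> 1" using S_ne[OF j] S_fin[OF j] by (simp add: Suc_leI card_gt_0_iff)
    ultimately have "int (card (S j - {s0 j})) = int (card (S j)) - 1" by simp
    also have "\<dots> \<le> int (\<Prod>l<L j. R j l) - 1"
      using S_card[OF j] of_nat_le_iff diff_right_mono by blast
    finally show "int (card (S j - {s0 j})) \<le> (\<Prod>l<L j. int (R j l)) - 1" by simp
  qed
  also have "\<dots> = (\<Sum>j<N. \<Prod>l<L j. int (R j l)) - int N" by (simp add: sum_subtractf)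
  finally have cardP: "card Pairs < CARD('d)" using dim_large by linarith
  have "card Pairs \<le> card (Basis :: (real^'d) set)" using cardP by simp
  then obtain g where g: "g ` Pairs \<subseteq> (Basis :: (real^'d) set)" "inj_on g Pairs"
    using card_le_inj[OF Pairs_fin finite_Basis] by blast
  define f where "f \<theta> = (\<Sum>p\<in>Pairs. q (fst p) (snd p) \<theta> *\<^sub>R g p)" for \<theta>
  have f_inner: "f \<theta> \<bullet> g p = q (fst p) (snd p) \<theta>" if "p \<in> Pairs" for \<theta> p
  proof -
    have "f \<theta> \<bullet> g p = (\<Sum>p'\<in>Pairs. q (fst p') (snd p') \<theta> * (g p' \<bullet> g p))"
      unfolding f_def by (simp add: inner_sum_left)
    also have "\<dots> = (\<Sum>p'\<in>Pairs. if p' = p then q (fst p') (snd p') \<theta> else 0)"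
    proof (rule sum.cong)
      fix p' assume p': "p' \<in> Pairs"
      have "g p' \<bullet> g p = (if p' = p then 1 else 0)"
      proof -
        have b: "g p' \<in> Basis" "g p \<in> Basis" using g(1) p' that by auto
        have "g p' = g p \<longleftrightarrow> p' = p" using inj_onD[OF g(2) _ p' that] by blast
        then show ?thesis using inner_Basis[OF b] by simp
      qed
      then show "q (fst p') (snd p') \<theta> * (g p' \<bullet> g p) = (if p' = p then q (fst p') (snd p') \<theta> else 0)"
        by simp
    qed simp
    also have "\<dots> = q (fst p) (snd p) \<theta>" using that Pairs_fin by simp
    finally show ?thesis .
  qed
  have key: "\<exists>\<theta>\<in>V. \<exists>\<theta>'\<in>V. obs_equiv P I R L X N \<theta> \<theta>'"
    if V: "open V" "V \<noteq> {}" "V \<subseteq> \<Theta>" for V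
  proof -
    have contf: "continuous_on V f"
      unfolding f_def
    proof (intro continuous_on_sum continuous_on_scaleR continuous_on_const)
      fix p assume "p \<in> Pairs"
      then have "fst p < N" "snd p \<in> outcomes I R L X (fst p)"
        unfolding Pairs_def S_def by auto
      then show "continuous_on V (\<lambda>\<theta>. q (fst p) (snd p) \<theta>)"
        unfolding q_def by (intro continuous_on_subset[OF q_continuous V(3)])
    qed
    have "\<not> inj_on f V"
    proof
      assume inj: "inj_on f V"
      have "dim (UNIV :: (real^'d) set) \<le> dim (span (g ` Pairs))"
      proof (rule invariance_of_dimension_subspaces[OF _ _ _ contf _ inj V(2)])
        show "openin (top_of_set UNIV) V" using V(1) by simp
        show "subspace (UNIV :: (real^'d) set)" by simp
        show "subspace (span (g ` Pairs))" by simp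
        show "f ` V \<subseteq> span (g ` Pairs)"
          unfolding f_def by (intro image_subsetI span_sum span_scale span_base imageI)
      qed
      also have "\<dots> \<le> card (g ` Pairs)" using Pairs_fin by (simp add: dim_le_card')
      also have "\<dots> \<le> card Pairs" by (rule card_image_le[OF Pairs_fin])
      finally show False using cardP by simp
    qed
    then obtain \<theta> \<theta>' where th: "\<theta> \<in> V" "\<theta>' \<in> V" "\<theta> \<noteq> \<theta>'" "f \<theta> = f \<theta>'"
      unfolding inj_on_def by blast
    have thT: "\<theta> \<in> \<Theta>" "\<theta>' \<in> \<Theta>" using th V(3) by auto
    have eqP: "q j s \<theta> = q j s \<theta>'" if "j < N" "s \<in> S j" "s \<noteq> s0 j" for j s
    proof -
      have "(j, s) \<in> Pairs" unfolding Pairs_def using that by auto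
      then show ?thesis using f_inner[of "(j,s)" \<theta>] f_inner[of "(j,s)" \<theta>'] th(4) by simp
    qed
    have eqS: "q j s \<theta> = q j s \<theta>'" if "j < N" "s \<in> S j" for j s
    proof (cases "s = s0 j")
      case False then show ?thesis using eqP that by blast
    next
      case True
      have "q j (s0 j) \<theta> = 1 - (\<Sum>s\<in>S j - {s0 j}. q j s \<theta>)"
        using sum1[OF that(1) thT(1)] sum.remove[OF S_fin[OF that(1)] s0[OF that(1)], of "\<lambda>s. q j s \<theta>"]
        by simp
      also have "\<dots> = 1 - (\<Sum>s\<in>S j - {s0 j}. q j s \<theta>')"
        using eqP that(1) by (auto intro!: sum.cong)
      also have "\<dots> = q j (s0 j) \<theta>'"
        using sum1[OF that(1) thT(2)] sum.remove[OF S_fin[OF that(1)] s0[OF that(1)], of "\<lambda>s. q j s \<theta>'"]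
        by simp
      finally show ?thesis using True by simp
    qed
    have "obs_equiv P I R L X N \<theta> \<theta>'"
      unfolding obs_equiv_def
    proof (intro conjI allI impI)
      show "\<theta> \<noteq> \<theta>'" by fact
      fix u assume "possible_msg I R L X N u"
      then have "\<forall>j<N. u j \<in> S j" unfolding possible_msg_def S_def by auto
      then show "PrU P I R L N u \<theta> = PrU P I R L N u \<theta>'"
        unfolding PrU_def using eqS unfolding q_def by (auto intro!: prod.cong)
    qed
    then show ?thesis using th by blast
  qed
  have nonid: "\<exists>\<theta>\<in>V. \<not> identifiable_point P I R L X N \<Theta> \<theta>"
    if VV: "open V" "V \<noteq> {}" "V \<subseteq> \<Theta>" for V
  proof -
    obtain \<theta> \<theta>' where "\<theta> \<in> V" "\<theta>' \<in> V" "obs_equiv P I R L X N \<theta> \<theta>'"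
      using key[OF VV] by blast
    then show ?thesis using VV(3) unfolding identifiable_point_def obs_equiv_def by blast
  qed
  have part1: "\<not> identifiable_set P I R L X N \<Theta>"
    using nonid[of "interior \<Theta>"] interior_nonempty interior_subset
    unfolding identifiable_set_def by blast
  have part2: "infinite {\<theta> \<in> U. \<not> identifiable_point P I R L X N \<Theta> \<theta>}"
    if U: "open U" "U \<noteq> {}" "U \<subseteq> \<Theta>" for U
  proof
    let ?F = "{\<theta> \<in> U. \<not> identifiable_point P I R L X N \<Theta> \<theta>}"
    assume fin: "finite ?F"
    have "open (U - ?F)" using U(1) fin by (intro open_Diff finite_imp_closed)
    moreover have "U - ?F \<noteq> {}"
    proof
      assume "U - ?F = {}"
      then have "U \<subseteq> ?F" by blast
      then have "finite U" using fin finite_subset by blast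
      then show False using U(1,2) finite_imp_not_open by blast
    qed
    ultimately obtain \<theta> where "\<theta> \<in> U - ?F" "\<not> identifiable_point P I R L X N \<Theta> \<theta>"
      using nonid[of "U - ?F"] U(3) by blast
    then show False by blast
  qed
  show ?thesis using part1 part2 by blast
qed

end
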